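(* Let $n\ge 2$, $q=e^{2\pi i/6}$, and in $Q_n$ define $s_i=\frac{-1}{2q}(1+u_i+v_i+u_iv_i)$ for $1\le i\le n-1$. Then the $s_i$ satisfy $s_is_{i+1}s_i=s_{i+1}s_is_{i+1}$ for $1\le i\le n-2$, $s_is_j=s_js_i$ for $|i-j|\ge 2$, and $(s_i-q)(s_i+1)=0$ for all $i$. Moreover $s_1^{-1}=-\frac{q}{2}(1-u_1-v_1-u_1v_1)$ and $s_1^{-1}u_1s_1=u_1v_1$, $s_1^{-1}v_1s_1=u_1$, $s_1^{-1}u_2s_1=u_2v_1$, $s_1^{-1}v_2s_1=-u_1v_1v_2$.
   Context: $Q_n$ is the $\mathbb{C}$-algebra with generators $u_1,v_1,\dots,u_{n-1},v_{n-1}$ and relations: (G1) $u_i^2=v_i^2=-1$; (G2) $[u_i,v_j]=-1$ if $|i-j|\le 1$; (G3) $[u_i,v_j]=1$ if $|i-j|\ge 2$; (G4) $[u_i,u_j]=[v_i,v_j]=1$, where $[a,b]=aba^{-1}b^{-1}$. *)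

theory Defs
  imports Complex_Main
begin

text \<open>A complex algebra structure on a unital ring: a unital ring homomorphism
  from the complex numbers into the centre of the ring (scalar multiplication
  c x is emb c * x).\<close>
definition complex_alg_emb :: "(complex \<Rightarrow> 'a::ring_1) \<Rightarrow> bool" where
  "complex_alg_emb emb \<longleftrightarrow>
     emb 1 = 1 \<and> (\<forall>a b. emb (a + b) = emb a + emb b) \<and>
     (\<forall>a b. emb (a * b) = emb a * emb b) \<and> (\<forall>c x. emb c * x = x * emb c)"

definition ring_inv :: "'a::ring_1 \<Rightarrow> 'a" where
  "ring_inv a = (THE b. a * b = 1 \<and> b * a = 1)"

definition commutator :: "'a::ring_1 \<Rightarrow> 'a \<Rightarrow> 'a" where
  "commutator a b = a * b * ring_inv a * ring_inv b"

text \<open>The defining relations (G1)-(G4) of Q_n for generators u_i, v_i, 1 <= i <= n-1.\<close>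
definition Q_relations :: "nat \<Rightarrow> (nat \<Rightarrow> 'a::ring_1) \<Rightarrow> (nat \<Rightarrow> 'a) \<Rightarrow> bool" where
  "Q_relations n u v \<longleftrightarrow>
     (\<forall>i\<in>{1..n-1}. u i ^ 2 = -1 \<and> v i ^ 2 = -1) \<and>
     (\<forall>i\<in>{1..n-1}. \<forall>j\<in>{1..n-1}.
        (\<bar>int i - int j\<bar> \<le> 1 \<longrightarrow> commutator (u i) (v j) = -1) \<and>
        (\<bar>int i - int j\<bar> \<ge> 2 \<longrightarrow> commutator (u i) (v j) = 1) \<and>
        commutator (u i) (u j) = 1 \<and> commutator (v i) (v j) = 1)"

definition qq :: complex where
  "qq = exp (2 * pi * \<i> / 6)"

definition s_gen :: "(complex \<Rightarrow> 'a::ring_1) \<Rightarrow> (nat \<Rightarrow> 'a) \<Rightarrow> (nat \<Rightarrow> 'a) \<Rightarrow> nat \<Rightarrow> 'a" where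
  "s_gen emb u v i = emb (-1 / (2 * qq)) * (1 + u i + v i + u i * v i)"

end

theory Submission imports Defs begin
lemma braid:
  fixes a b c d :: "'a::ring_1"
  assumes aa: "a*a = -1" and bb: "b*b = -1" and cc: "c*c = -1" and dd: "d*d=-1"
  and ba: "b*a = a*b" and ca: "c*a = -(a*c)" and da: "d*a = -(a*d)"
  and cb: "c*b = -(b*c)" and db: "d*b = -(b*d)" and dc: "d*c = c*d"
  shows "(1+a+c+a*c)*(1+b+d+b*d)*(1+a+c+a*c) = (1+b+d+b*d)*(1+a+c+a*c)*(1+b+d+b*d)"
proof -
  have r: "a*(a*z) = -z" "b*(b*z) = -z" "c*(c*z) = -z" "d*(d*z) = -z"
    "b*(a*z) = a*(b*z)" "c*(a*z) = -(a*(c*z))" "d*(a*z) = -(a*(d*z))"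
    "c*(b*z) = -(b*(c*z))" "d*(b*z) = -(b*(d*z))" "d*(c*z) = c*(d*z)" for z
    by (simp_all add: mult.assoc[symmetric] aa bb cc dd ba ca da cb db dc)
  show ?thesis
    by (simp add: algebra_simps aa bb cc dd ba ca da cb db dc r)
qed

lemma quad:
  fixes a c :: "'a::ring_1"
  assumes aa: "a*a = -1" and cc: "c*c = -1" and ca: "c*a = -(a*c)"
  shows "(1+a+c+a*c)*(1+a+c+a*c) = (1+a+c+a*c) + (1+a+c+a*c) - (1+1+1+1)"
    "(1+a+c+a*c)*(1-a-c-a*c) = 1+1+1+1" "(1-a-c-a*c)*(1+a+c+a*c) = 1+1+1+1"
    "(1-a-c-a*c)*a*(1+a+c+a*c) = a*c+a*c+a*c+a*c"
    "(1-a-c-a*c)*c*(1+a+c+a*c) = a+a+a+a"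
proof -
  have r: "a*(a*z) = -z" "c*(c*z) = -z" "c*(a*z) = -(a*(c*z))" for z
    by (simp_all add: mult.assoc[symmetric] aa cc ca)
  show "(1+a+c+a*c)*(1+a+c+a*c) = (1+a+c+a*c) + (1+a+c+a*c) - (1+1+1+1)"
    "(1+a+c+a*c)*(1-a-c-a*c) = 1+1+1+1" "(1-a-c-a*c)*(1+a+c+a*c) = 1+1+1+1"
    "(1-a-c-a*c)*a*(1+a+c+a*c) = a*c+a*c+a*c+a*c"
    "(1-a-c-a*c)*c*(1+a+c+a*c) = a+a+a+a"
    by (simp_all add: algebra_simps aa cc ca r)
qed
lemma conj2:
  fixes a b c d :: "'a::ring_1"
  assumes aa: "a*a = -1" and bb: "b*b = -1" and cc: "c*c = -1" and dd: "d*d=-1"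
  and ba: "b*a = a*b" and ca: "c*a = -(a*c)" and da: "d*a = -(a*d)"
  and cb: "c*b = -(b*c)" and db: "d*b = -(b*d)" and dc: "d*c = c*d"
  shows "(1-a-c-a*c)*b*(1+a+c+a*c) = b*c+b*c+b*c+b*c"
    "(1-a-c-a*c)*d*(1+a+c+a*c) = -(a*c*d+a*c*d+a*c*d+a*c*d)"
proof -
  have r: "a*(a*z) = -z" "b*(b*z) = -z" "c*(c*z) = -z" "d*(d*z) = -z"
    "b*(a*z) = a*(b*z)" "c*(a*z) = -(a*(c*z))" "d*(a*z) = -(a*(d*z))"
    "c*(b*z) = -(b*(c*z))" "d*(b*z) = -(b*(d*z))" "d*(c*z) = c*(d*z)" for z
    by (simp_all add: mult.assoc[symmetric] aa bb cc dd ba ca da cb db dc)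
  show "(1-a-c-a*c)*b*(1+a+c+a*c) = b*c+b*c+b*c+b*c"
    "(1-a-c-a*c)*d*(1+a+c+a*c) = -(a*c*d+a*c*d+a*c*d+a*c*d)"
    by (simp_all add: algebra_simps aa bb cc dd ba ca da cb db dc r)
qed
lemma farcomm:
  fixes a b c d :: "'a::ring_1"
  assumes aa: "a*a = -1" and bb: "b*b = -1" and cc: "c*c = -1" and dd: "d*d=-1"
  and ba: "b*a = a*b" and ca: "c*a = -(a*c)" and da: "d*a = a*d"
  and cb: "c*b = b*c" and db: "d*b = -(b*d)" and dc: "d*c = c*d"
  shows "(1+a+c+a*c)*(1+b+d+b*d) = (1+b+d+b*d)*(1+a+c+a*c)"
proof -
  have r: 
    "a*(a*z) = -z" "b*(b*z) = -z" "c*(c*z) = -z" "d*(d*z) = -z"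
    "b*(a*z) = a*(b*z)" "c*(a*z) = -(a*(c*z))" "d*(a*z) = (a*(d*z))"
    "c*(b*z) = (b*(c*z))" "d*(b*z) = -(b*(d*z))" "d*(c*z) = c*(d*z)" for z
    by (simp_all add: mult.assoc[symmetric] aa bb cc dd ba ca da cb db dc)
  show ?thesis
    by (simp add: algebra_simps aa bb cc dd ba ca da cb db dc r)
qed
lemma qq_val: "exp (2 * pi * \<i> / 6) ^ 2 = exp (2 * pi * \<i> / 6) - 1"
proof -
  have "2 * pi * \<i> / 6 = \<i> * complex_of_real (pi/3)" by simp
  hence "exp (2 * pi * \<i> / 6) = cis (pi/3)" by (simp add: cis_conv_exp)
  hence "exp (2 * pi * \<i> / 6) = Complex (1/2) (sqrt 3 / 2)"
    by (simp add: complex_eq_iff cos_60 sin_60)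
  note e = this
  have "Complex (1/2) (sqrt 3/2) ^ 2 = Complex (1/2) (sqrt 3/2) - 1"
    by (simp add: complex_eq_iff power2_eq_square)
  then show ?thesis unfolding e .
qed


lemma ring_inv_eq:
  fixes a b :: "'a::ring_1"
  assumes "a*b = 1" "b*a = 1" shows "ring_inv a = b"
  unfolding ring_inv_def
proof (rule the_equality)
  show "a * b = 1 \<and> b * a = 1" using assms by simp
  fix b' assume h: "a * b' = 1 \<and> b' * a = 1"
  have "b' = b' * (a * b)" using assms by simp
  also have "... = (b' * a) * b" by (simp add: mult.assoc)
  also have "... = b" using h by simp
  finally show "b' = b" .
qed

lemma inv_sq: fixes x :: "'a::ring_1" assumes "x*x = -1" shows "ring_inv x = -x"
  by (rule ring_inv_eq) (simp_all add: assms)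

lemma comm_m1:
  fixes x y :: "'a::ring_1"
  assumes xx: "x*x = -1" and yy: "y*y = -1" and c: "commutator x y = -1"
  shows "y*x = -(x*y)"
proof -
  have h: "x*y*x*y = -1" using c by (simp add: commutator_def inv_sq xx yy)
  have "y*x = -(x*y*x*y)*(y*x)" by (simp add: h)
  also have "... = -(x*y*x*(y*y)*x)" unfolding h[symmetric] by (simp add: mult.assoc)
  also have "... = x*y*(x*x)" by (simp add: yy mult.assoc)
  also have "... = -(x*y)" by (simp add: xx)
  finally show ?thesis .
qed

lemma comm_1:
  fixes x y :: "'a::ring_1"
  assumes xx: "x*x = -1" and yy: "y*y = -1" and c: "commutator x y = 1"
  shows "y*x = x*y"
proof -
  have h: "x*y*x*y = 1" using c by (simp add: commutator_def inv_sq xx yy)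
  have "y*x = (x*y*x*y)*(y*x)" by (simp add: h)
  also have "... = x*y*x*(y*y)*x" by (simp add: mult.assoc)
  also have "... = -(x*y*(x*x))" by (simp add: yy mult.assoc)
  also have "... = x*y" by (simp add: xx)
  finally show ?thesis .
qed

lemma Qrel:
  assumes "Q_relations n u v" "i\<in>{1..n-1}" "j\<in>{1..n-1}"
  shows "u i * u i = -1" "v i * v i = -1"
    "\<bar>int i - int j\<bar> \<le> 1 \<Longrightarrow> v j * u i = -(u i * v j)"
    "\<bar>int i - int j\<bar> \<ge> 2 \<Longrightarrow> v j * u i = u i * v j"
    "u j * u i = u i * u j" "v j * v i = v i * v j"
proof -
  have Q: "\<forall>i\<in>{1..n-1}. u i ^ 2 = -1 \<and> v i ^ 2 = -1"
     "\<forall>i\<in>{1..n-1}. \<forall>j\<in>{1..n-1}.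
        (\<bar>int i - int j\<bar> \<le> 1 \<longrightarrow> commutator (u i) (v j) = -1) \<and>
        (\<bar>int i - int j\<bar> \<ge> 2 \<longrightarrow> commutator (u i) (v j) = 1) \<and>
        commutator (u i) (u j) = 1 \<and> commutator (v i) (v j) = 1"
    using assms(1) unfolding Q_relations_def by auto
  have sq: "u k * u k = -1" "v k * v k = -1" if "k\<in>{1..n-1}" for k
    using Q(1) that by (auto simp: power2_eq_square)
  show "u i * u i = -1" "v i * v i = -1" using sq assms by auto
  have C: "(\<bar>int i - int j\<bar> \<le> 1 \<longrightarrow> commutator (u i) (v j) = -1)"
        "(\<bar>int i - int j\<bar> \<ge> 2 \<longrightarrow> commutator (u i) (v j) = 1)"
        "commutator (u i) (u j) = 1" "commutator (v i) (v j) = 1"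
    using Q(2) assms(2,3) by auto
  show "\<bar>int i - int j\<bar> \<le> 1 \<Longrightarrow> v j * u i = -(u i * v j)"
    using C(1) by (intro comm_m1[OF sq(1)[OF assms(2)] sq(2)[OF assms(3)]]) simp
  show "\<bar>int i - int j\<bar> \<ge> 2 \<Longrightarrow> v j * u i = u i * v j"
    using C(2) by (intro comm_1[OF sq(1)[OF assms(2)] sq(2)[OF assms(3)]]) simp
  show "u j * u i = u i * u j"
    by (rule comm_1[OF sq(1)[OF assms(2)] sq(1)[OF assms(3)] C(3)])
  show "v j * v i = v i * v j"
    by (rule comm_1[OF sq(2)[OF assms(2)] sq(2)[OF assms(3)] C(4)])
qed

lemma emb_facts:
  assumes "complex_alg_emb emb"
  shows "emb 1 = 1" "emb (a+b) = emb a + emb b" "emb (a*b) = emb a * emb b"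
    "emb c * x = x * emb c" "emb 0 = 0" "emb (-a) = - emb a"
    "emb a * x * (emb b * y) = emb (a*b) * (x*y)"
    "emb a * x * y * (emb b * z) = emb (a*b) * (x*y*z)"
    "emb a * (emb b * y) = emb (a*b) * y"
proof -
  have e1: "emb 1 = 1" and ea: "\<And>a b. emb (a+b) = emb a + emb b"
    and em: "\<And>a b. emb (a*b) = emb a * emb b" and ec: "\<And>c x. emb c * x = x * emb c"
    using assms unfolding complex_alg_emb_def by blast+
  show "emb 1 = 1" by (rule e1)
  show "emb (a+b) = emb a + emb b" by (rule ea)
  show "emb (a*b) = emb a * emb b" by (rule em)
  show "emb c * x = x * emb c" by (rule ec)
  have "emb 0 = emb (0+0)" by simp
  then have "emb 0 = emb 0 + emb 0" by (simp only: ea)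
  then show e0: "emb 0 = 0" by simp
  have "emb (-a) + emb a = emb (-a + a)" by (simp only: ea)
  then have "emb (-a) + emb a = 0" using e0 by simp
  then show "emb (-a) = - emb a" by (simp add: add_eq_0_iff)
  show "emb a * (emb b * y) = emb (a*b) * y"
    by (simp add: em mult.assoc)
  show "emb a * x * (emb b * y) = emb (a*b) * (x*y)"
  proof -
    have "emb a * x * (emb b * y) = emb a * (x * emb b) * y" by (simp add: mult.assoc)
    also have "... = emb a * (emb b * x) * y" by (simp add: ec[of b x])
    also have "... = emb (a*b) * (x*y)" by (simp add: em mult.assoc)
    finally show ?thesis .
  qed
  show "emb a * x * y * (emb b * z) = emb (a*b) * (x*y*z)"
  proof -
    have "emb a * x * y * (emb b * z) = emb a * (x * y * emb b) * z" by (simp add: mult.assoc)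
    also have "... = emb a * (emb b * (x*y)) * z" by (simp add: ec[of b "x*y"])
    also have "... = emb (a*b) * (x*y*z)" by (simp add: em mult.assoc)
    finally show ?thesis .
  qed
qed

lemma mult4: "(x::'a::ring_1) * 4 = x+x+x+x"
proof -
  have "(4::'a) = 1+1+1+1" by simp
  then show ?thesis by (simp only: distrib_left mult_1_right)
qed

lemma qq_consts: fixes q c :: complex assumes q2: "q*q = q - 1" and qnz: "q \<noteq> 0" and qn1: "q\<noteq>1" and c: "c = -1/(2*q)"
  shows "q * c = c + c*c + c*c" "q = -(c*c + c*c + c*c + c*c)"
proof -
  have cq: "c * q = -1/2" using c qnz by simp
  have iq: "1/q = 1 - q" using q2 qnz by (simp add: field_simps)
  have "c = -(1-q)/2" using c iq by (simp add: field_simps)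
  then have c': "2*c = q - 1" by (simp add: mult.commute)
  show "q * c = c + c*c + c*c"
    using c' q2 by algebra
  show "q = -(c*c + c*c + c*c + c*c)"
    using c' q2 by algebra
qed

theorem mainTheorem3:
  fixes emb :: "complex \<Rightarrow> 'a::ring_1"
    and u v :: "nat \<Rightarrow> 'a"
    and n :: nat
  assumes "n \<ge> 2"
    and "complex_alg_emb emb"
    and "Q_relations n u v"
  defines "s \<equiv> s_gen emb u v"
  shows "(\<forall>i\<in>{1..n-2}. s i * s (i+1) * s i = s (i+1) * s i * s (i+1))
       \<and> (\<forall>i\<in>{1..n-1}. \<forall>j\<in>{1..n-1}. \<bar>int i - int j\<bar> \<ge> 2 \<longrightarrow> s i * s j = s j * s i)
       \<and> (\<forall>i\<in>{1..n-1}. (s i - emb qq) * (s i + 1) = 0)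
       \<and> ring_inv (s 1) = emb (- qq / 2) * (1 - u 1 - v 1 - u 1 * v 1)
       \<and> ring_inv (s 1) * u 1 * s 1 = u 1 * v 1
       \<and> ring_inv (s 1) * v 1 * s 1 = u 1
       \<and> (n \<ge> 3 \<longrightarrow>
            ring_inv (s 1) * u 2 * s 1 = u 2 * v 1
          \<and> ring_inv (s 1) * v 2 * s 1 = - (u 1 * v 1 * v 2))"
proof -
  note E = emb_facts[OF assms(2)]
  note R = Qrel[OF assms(3)]
  define c where "c = -1 / (2*qq)"
  define d where "d = - qq / 2"
  define A where "A i = 1 + u i + v i + u i * v i" for i
  define B where "B = 1 - u 1 - v 1 - u 1 * v 1"
  have sA: "s i = emb c * A i" for i unfolding s_def s_gen_def c_def A_def by simp
  have q2: "qq^2 = qq - 1" unfolding qq_def by (rule qq_val)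
  have qnz: "qq \<noteq> 0" unfolding qq_def by simp
  have qn1: "qq \<noteq> 1" using q2 by auto
  have cd: "c * d = 1/4" unfolding c_def d_def using qnz by (simp add: field_simps)
  have dc: "d * c = 1/4" using cd by (simp add: mult.commute)
  have q2': "qq*qq = qq - 1" using q2 by (simp add: power2_eq_square)
  note kk = qq_consts[OF q2' qnz qn1 c_def]
  have k1: "qq * c = c + c*c + c*c" by (rule kk(1))
  have k2: "qq = -(c*c + c*c + c*c + c*c)" by (rule kk(2))
  have quarter: "emb (1/4) * (w + w + w + w) = w" for w
  proof -
    have e: "emb (1/4+1/4+1/4+1/4) = emb (1/4)+emb (1/4)+emb (1/4)+emb (1/4)" by (simp only: E(2))
    have "emb (1/4) * (w + w + w + w) = emb (1/4+1/4+1/4+1/4) * w"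
      unfolding e by (simp add: algebra_simps)
    also have "... = w" using E(1) by simp
    finally show ?thesis .
  qed
  have n1: "1 \<in> {1..n-1}" using assms(1) by auto
  have inv: "ring_inv (s 1) = emb d * B"
  proof (rule ring_inv_eq)
    have q: "A 1 * B = 1+1+1+1" "B * A 1 = 1+1+1+1"
      unfolding A_def B_def using quad(2,3)[OF R(1,2)[OF n1 n1] R(3)[OF n1 n1]] by auto
    show "s 1 * (emb d * B) = 1" unfolding sA E(7) cd q(1)
      using quarter[of 1] by simp
    show "emb d * B * s 1 = 1" unfolding sA E(7) dc q(2)
      using quarter[of 1] by simp
  qed
  have conj1: "ring_inv (s 1) * u 1 * s 1 = u 1 * v 1" "ring_inv (s 1) * v 1 * s 1 = u 1"
    unfolding inv unfolding sA E(8) dc B_def A_def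
    using quad(4,5)[OF R(1,2)[OF n1 n1] R(3)[OF n1 n1]] quarter by auto
  have conj2: "ring_inv (s 1) * u 2 * s 1 = u 2 * v 1 \<and> ring_inv (s 1) * v 2 * s 1 = - (u 1 * v 1 * v 2)"
    if "n \<ge> 3"
  proof -
    have n2: "2 \<in> {1..n-1}" using that by auto
    have h: "(1-u 1-v 1-u 1*v 1)*u 2*(1+u 1+v 1+u 1*v 1) = u 2*v 1+u 2*v 1+u 2*v 1+u 2*v 1"
      "(1-u 1-v 1-u 1*v 1)*v 2*(1+u 1+v 1+u 1*v 1) = -(u 1*v 1*v 2+u 1*v 1*v 2+u 1*v 1*v 2+u 1*v 1*v 2)"
      using conj2[OF R(1)[OF n1 n1] R(1)[OF n2 n2] R(2)[OF n1 n1] R(2)[OF n2 n2]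
          R(5)[OF n1 n2] R(3)[OF n1 n1] R(3)[OF n1 n2] R(3)[OF n2 n1] R(3)[OF n2 n2] R(6)[OF n1 n2]]
      by simp_all
    show ?thesis
      unfolding inv unfolding sA E(8) dc B_def A_def h
      using quarter[of "u 2 * v 1"] quarter[of "-(u 1 * v 1 * v 2)"] by simp
  qed
  have braidP: "s i * s (i+1) * s i = s (i+1) * s i * s (i+1)" if "i\<in>{1..n-2}" for i
  proof -
    have a: "i \<in> {1..n-1}" "i+1 \<in> {1..n-1}" using that by auto
    have "A i * A (i+1) * A i = A (i+1) * A i * A (i+1)"
      unfolding A_def
      by (rule braid[OF R(1)[OF a(1) a(1)] R(1)[OF a(2) a(2)] R(2)[OF a(1) a(1)] R(2)[OF a(2) a(2)]
          R(5)[OF a(1) a(2)] R(3)[OF a(1) a(1)] R(3)[OF a(1) a(2)] R(3)[OF a(2) a(1)] R(3)[OF a(2) a(2)] R(6)[OF a(1) a(2)]])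
         auto
    then show ?thesis unfolding sA E(7) by simp
  qed
  have far: "s i * s j = s j * s i" if "i\<in>{1..n-1}" "j\<in>{1..n-1}" "\<bar>int i - int j\<bar> \<ge> 2" for i j
  proof -
    have "A i * A j = A j * A i"
      unfolding A_def
      by (rule farcomm[OF R(1)[OF that(1) that(1)] R(1)[OF that(2) that(2)] R(2)[OF that(1) that(1)] R(2)[OF that(2) that(2)]
          R(5)[OF that(1) that(2)] R(3)[OF that(1) that(1)] R(4)[OF that(1) that(2) that(3)]
          R(4)[OF that(2) that(1)] R(3)[OF that(2) that(2)] R(6)[OF that(1) that(2)]])
        (use that(3) in auto)
    then show ?thesis unfolding sA by (simp add: E(7))
  qed
  have quadP: "(s i - emb qq) * (s i + 1) = 0" if "i\<in>{1..n-1}" for i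
  proof -
    have AA: "A i * A i = A i + A i - (1+1+1+1)"
      unfolding A_def using quad(1)[OF R(1,2)[OF that that] R(3)[OF that that]] by auto
    have "(s i - emb qq) * (s i + 1) = s i * s i + s i - emb qq * s i - emb qq"
      by (simp add: algebra_simps)
    also have "... = emb (c*c) * (A i + A i - (1+1+1+1)) + emb c * A i - emb (qq*c) * A i - emb qq"
      unfolding sA E(7) E(9) AA by simp
    also have "... = 0"
      unfolding k1 unfolding k2 E(2) E(6) by (simp add: algebra_simps mult4)
    finally show ?thesis .
  qed
  show ?thesis
    using braidP far quadP inv conj1 conj2 unfolding B_def d_def by blast
qed

end
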